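(* Let $D$ be a locatable digraph of order $n$. Then $\gamma_{OL}(D)=n$ if and only if $D$ can be constructed as follows. (1) Choose vertex-disjoint directed cycles $C_1,\dots,C_k$ (of orders $n_1+\dots+n_k=n$, loops and 2-cycles allowed) covering $V(D)$; these will be exactly the forcing arcs of $D$. For each vertex $v$, let $f^-(v)$ and $f^+(v)$ be the predecessor and successor of $v$ on its cycle. (2) Choose a partition $V(D)=V_d\cup V_l$ (the domination-forced and the location-forced vertices, respectively). (3) Construct a digraph $\mathcal{H}$ on $V(D)$ which is a disjoint union of vertex-disjoint rooted directed trees, such that the roots of the trees are precisely the vertices $f^+(x)$ with $x\in V_d$, and for every $x\in V_l$, the vertex $f^+(x)$ has an in-neighbour in $\mathcal{H}$. (4) The arc set of $D$ consists of the arcs of $C_1,\dots,C_k$ together with, for each tree $T$ of $\mathcal{H}$ and each vertex $v$ of $T$, an arc from $f^-(v)$ to every descendant of $v$ in $T$.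
   Context: Digraphs are finite and may contain loops; between two distinct vertices there may be arcs in one or both directions, no repeated arcs. $N^-(v)=\{u: uv\text{ is an arc}\}$ (contains $v$ iff $v$ has a loop). An OLD set of $D$ is a set $S\subseteq V(D)$ such that every vertex has an in-neighbour in $S$ and for every two distinct vertices $u,w$ some vertex of $S$ lies in exactly one of $N^-(u),N^-(w)$. $D$ is locatable if it has an OLD set, and then $\gamma_{OL}(D)$ is the minimum size of an OLD set. A vertex $v$ is domination-forced if some vertex $w$ has $N^-(w)=\{v\}$; location-forced if there are distinct vertices $x,y$ with $N^-(x)\ominus N^-(y)=\{v\}$. An arc $xy$ is forcing if $N^-(y)=\{x\}$ or there is a vertex $z$ with $N^-(z)=N^-(y)\setminus\{x\}$. A rooted directed tree is a digraph without loops and directed 2-cycles whose underlying undirected graph is a tree, with a single source (the root) and all arcs oriented away from the root; a single vertex is allowed. The descendants of $v$ in $T$ are the vertices reachable from $v$ by a directed path in $T$. *)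

theory Defs
  imports Main "HOL-Library.Disjoint_Sets"
begin

definition digraph :: "'a set \<Rightarrow> ('a \<times> 'a) set \<Rightarrow> bool" where
  "digraph V A \<longleftrightarrow> finite V \<and> A \<subseteq> V \<times> V"

definition in_nbrs :: "('a \<times> 'a) set \<Rightarrow> 'a \<Rightarrow> 'a set" where
  "in_nbrs A v = {u. (u, v) \<in> A}"

definition OLD_set :: "'a set \<Rightarrow> ('a \<times> 'a) set \<Rightarrow> 'a set \<Rightarrow> bool" where
  "OLD_set V A S \<longleftrightarrow> S \<subseteq> V
     \<and> (\<forall>v\<in>V. in_nbrs A v \<inter> S \<noteq> {})
     \<and> (\<forall>u\<in>V. \<forall>w\<in>V. u \<noteq> w \<longrightarrow> (in_nbrs A u - in_nbrs A w \<union> (in_nbrs A w - in_nbrs A u)) \<inter> S \<noteq> {})"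

definition locatable :: "'a set \<Rightarrow> ('a \<times> 'a) set \<Rightarrow> bool" where
  "locatable V A \<longleftrightarrow> (\<exists>S. OLD_set V A S)"

definition gamma_OL :: "'a set \<Rightarrow> ('a \<times> 'a) set \<Rightarrow> nat" where
  "gamma_OL V A = (LEAST k. \<exists>S. OLD_set V A S \<and> card S = k)"

definition rooted_dtree :: "'a set \<Rightarrow> ('a \<times> 'a) set \<Rightarrow> 'a \<Rightarrow> bool" where
  "rooted_dtree W T r \<longleftrightarrow> finite W \<and> r \<in> W \<and> T \<subseteq> W \<times> W
     \<and> (\<forall>x. (x, x) \<notin> T) \<and> (\<forall>x y. (x, y) \<in> T \<longrightarrow> (y, x) \<notin> T)
     \<and> (\<forall>x\<in>W. \<forall>y\<in>W. (x, y) \<in> (T \<union> T\<inverse>)\<^sup>*) \<and> card T = card W - 1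
     \<and> (\<forall>x\<in>W. in_nbrs T x = {} \<longleftrightarrow> x = r)
     \<and> (\<forall>x\<in>W. (r, x) \<in> T\<^sup>*)"

definition rooted_forest :: "'a set \<Rightarrow> ('a \<times> 'a) set \<Rightarrow> bool" where
  "rooted_forest V H \<longleftrightarrow> (\<exists>P. partition_on V P
     \<and> H \<subseteq> (\<Union>B\<in>P. B \<times> B)
     \<and> (\<forall>B\<in>P. \<exists>r. rooted_dtree B (H \<inter> (B \<times> B)) r))"

definition forest_roots :: "'a set \<Rightarrow> ('a \<times> 'a) set \<Rightarrow> 'a set" where
  "forest_roots V H = {v \<in> V. in_nbrs H v = {}}"

text \<open>The construction of Theorem 18. The vertex-disjoint directed cycles covering V
  are encoded by a permutation f of V (its cycles; fixed points are loops):
  f-plus(v) = f v, f-minus(v) = inv_into V f v.\<close>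
definition constructible :: "'a set \<Rightarrow> ('a \<times> 'a) set \<Rightarrow> bool" where
  "constructible V A \<longleftrightarrow> (\<exists>f Vd Vl H.
      bij_betw f V V
    \<and> Vd \<union> Vl = V \<and> Vd \<inter> Vl = {}
    \<and> H \<subseteq> V \<times> V \<and> rooted_forest V H
    \<and> forest_roots V H = f ` Vd
    \<and> (\<forall>x\<in>Vl. in_nbrs H (f x) \<noteq> {})
    \<and> A = {(v, f v) | v. v \<in> V}
          \<union> {(inv_into V f v, w) | v w. v \<in> V \<and> (v, w) \<in> H\<^sup>*})"

end

theory Submission
  imports Defs
begin


definition edgesL :: "('a \<Rightarrow> 'a set) \<Rightarrow> ('a \<Rightarrow> 'a set) \<Rightarrow> 'a set \<Rightarrow> ('a set \<times> 'a set) set" where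
  "edgesL S T L = {(S x, T x) | x. x \<in> L} \<union> {(T x, S x) | x. x \<in> L}"

lemma edgesL_symdiff:
  assumes "\<forall>x\<in>L. x \<notin> S x \<and> T x = insert x (S x)"
    and "(P, Q) \<in> (edgesL S T L)\<^sup>*"
  shows "P - Q \<union> (Q - P) \<subseteq> L"
  using assms(2)
proof (induction rule: rtrancl_induct)
  case base then show ?case by simp
next
  case (step Q' Q)
  from step.hyps(2) obtain x where x: "x \<in> L" "(Q',Q) = (S x, T x) \<or> (Q',Q) = (T x, S x)"
    unfolding edgesL_def by blast
  with assms(1) have "Q' - Q \<union> (Q - Q') \<subseteq> {x}" by auto
  with step.IH x(1) show ?case by blast
qed

lemma edgesL_sym: "(P, Q) \<in> (edgesL S T L)\<^sup>* \<Longrightarrow> (Q, P) \<in> (edgesL S T L)\<^sup>*"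
proof -
  have "sym (edgesL S T L)" unfolding edgesL_def sym_def by blast
  then have "sym ((edgesL S T L)\<^sup>*)" by (rule sym_rtrancl)
  then show "(P, Q) \<in> (edgesL S T L)\<^sup>* \<Longrightarrow> (Q, P) \<in> (edgesL S T L)\<^sup>*"
    unfolding sym_def by blast
qed

lemma edgesL_mono: "L \<subseteq> L' \<Longrightarrow> (edgesL S T L)\<^sup>* \<subseteq> (edgesL S T L')\<^sup>*"
  by (rule rtrancl_mono) (auto simp: edgesL_def)

lemma edgesL_count:
  assumes "finite L" "L \<subseteq> X"
    and H: "\<forall>x\<in>X. S x \<in> F0 \<and> T x \<in> F0 \<and> x \<notin> S x \<and> T x = insert x (S x)"
    and "finite F0"
  shows "\<exists>r. card (r ` F0) + card L = card F0 \<and> (\<forall>P\<in>F0. r P \<in> F0 \<and> (P, r P) \<in> (edgesL S T L)\<^sup>*)"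
  using assms(1,2)
proof (induction L rule: finite_induct)
  case empty
  show ?case by (rule exI[of _ id]) simp
next
  case (insert x L)
  then obtain r where r: "card (r ` F0) + card L = card F0"
    "\<forall>P\<in>F0. r P \<in> F0 \<and> (P, r P) \<in> (edgesL S T L)\<^sup>*" by auto
  have xX: "x \<in> X" using insert by auto
  have LX: "\<forall>y\<in>L. y \<notin> S y \<and> T y = insert y (S y)" using H insert by auto
  have SF: "S x \<in> F0" and TF: "T x \<in> F0" using H xX by auto
  define E' where "E' = edgesL S T (insert x L)"
  have mono: "(edgesL S T L)\<^sup>* \<subseteq> E'\<^sup>*" unfolding E'_def by (rule edgesL_mono) auto
  have neq: "r (S x) \<noteq> r (T x)"
  proof
    assume eq: "r (S x) = r (T x)"
    have "(S x, r (S x)) \<in> (edgesL S T L)\<^sup>*" using r SF by auto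
    moreover have "(r (T x), T x) \<in> (edgesL S T L)\<^sup>*" using r TF edgesL_sym by metis
    ultimately have "(S x, T x) \<in> (edgesL S T L)\<^sup>*" using eq by auto
    then have "S x - T x \<union> (T x - S x) \<subseteq> L" using edgesL_symdiff[OF LX] by blast
    moreover have "x \<in> T x - S x" using H xX by auto
    ultimately show False using insert.hyps(2) by blast
  qed
  define r' where "r' = (\<lambda>P. if r P = r (T x) then r (S x) else r P)"
  have img: "r' ` F0 = r ` F0 - {r (T x)}"
  proof
    show "r' ` F0 \<subseteq> r ` F0 - {r (T x)}" using neq SF unfolding r'_def by auto
    show "r ` F0 - {r (T x)} \<subseteq> r' ` F0"
    proof
      fix a assume "a \<in> r ` F0 - {r (T x)}"
      then obtain P where "P \<in> F0" "a = r P" "r P \<noteq> r (T x)" by auto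
      then show "a \<in> r' ` F0" unfolding r'_def by force
    qed
  qed
  have "card (r' ` F0) = card (r ` F0) - 1"
    unfolding img using TF \<open>finite F0\<close> by (simp add: card_Diff_singleton)
  moreover have "card (r ` F0) \<ge> 1" using TF \<open>finite F0\<close>
    by (metis One_nat_def Suc_leI card_gt_0_iff empty_iff finite_imageI image_eqI)
  ultimately have c: "card (r' ` F0) + card (insert x L) = card F0"
    using r(1) insert.hyps by simp
  have edge: "(T x, S x) \<in> E'" unfolding E'_def edgesL_def by blast
  have conn: "\<forall>P\<in>F0. r' P \<in> F0 \<and> (P, r' P) \<in> E'\<^sup>*"
  proof
    fix P assume P: "P \<in> F0"
    show "r' P \<in> F0 \<and> (P, r' P) \<in> E'\<^sup>*"
    proof (cases "r P = r (T x)")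
      case True
      have a: "(P, r P) \<in> E'\<^sup>*" using r P mono by auto
      have b: "(r (T x), T x) \<in> E'\<^sup>*" using r TF mono edgesL_sym unfolding E'_def by (metis subsetD)
      have c: "(S x, r (S x)) \<in> E'\<^sup>*" using r SF mono by auto
      have "(P, T x) \<in> E'\<^sup>*" using a b True by auto
      then have "(P, S x) \<in> E'\<^sup>*" using edge by (rule rtrancl_into_rtrancl)
      then have "(P, r (S x)) \<in> E'\<^sup>*" using c by (rule rtrancl_trans)
      then show ?thesis using True r SF unfolding r'_def by auto
    next
      case False
      then show ?thesis using r P mono unfolding r'_def by auto
    qed
  qed
  show ?case using c conn unfolding E'_def by blast
qed

lemma key:
  fixes X :: "'a set" and F :: "'a set set" and S T :: "'a \<Rightarrow> 'a set"
  assumes "finite X" "F \<subseteq> Pow X" "{} \<notin> F" "card F = card X"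
   and H: "\<forall>x\<in>X. S x \<in> insert {} F \<and> T x \<in> F \<and> x \<notin> S x \<and> T x = insert x (S x)"
  shows "inj_on T X"
proof (rule inj_onI, rule ccontr)
  fix a b assume a: "a \<in> X" and b: "b \<in> X" and eq: "T a = T b" and ab: "a \<noteq> b"
  define F0 where "F0 = insert {} F"
  have finF: "finite F" using assms(1,2) by (meson finite_Pow_iff finite_subset)
  have cF0: "card F0 = card X + 1" unfolding F0_def using finF assms(3,4) by simp
  define L where "L = X - {a, b}"
  have cL: "card L = card X - 2" unfolding L_def using a b ab assms(1) by (simp add: card_Diff_subset)
  have H0: "\<forall>x\<in>X. S x \<in> F0 \<and> T x \<in> F0 \<and> x \<notin> S x \<and> T x = insert x (S x)"
    using H unfolding F0_def by auto
  have "\<exists>r. card (r ` F0) + card L = card F0 \<and> (\<forall>P\<in>F0. r P \<in> F0 \<and> (P, r P) \<in> (edgesL S T L)\<^sup>*)"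
    by (rule edgesL_count[of L X S F0 T]) (use H0 finF assms(1) in \<open>auto simp: F0_def L_def\<close>)
  then obtain r where r: "card (r ` F0) + card L = card F0"
    "\<forall>P\<in>F0. r P \<in> F0 \<and> (P, r P) \<in> (edgesL S T L)\<^sup>*" by blast
  have "card {a, b} \<le> card X" using a b assms(1) by (intro card_mono) auto
  then have cX: "card X \<ge> 2" using ab by simp
  have c3: "card (r ` F0) = 3" using r(1) cF0 cL cX by simp
  have LX: "\<forall>y\<in>L. y \<notin> S y \<and> T y = insert y (S y)" using H unfolding L_def by auto
  have pat: "P \<inter> {a, b} = Q \<inter> {a, b}" if "P \<in> F0" "Q \<in> F0" "r P = r Q" for P Q
  proof -
    have "(P, r P) \<in> (edgesL S T L)\<^sup>*" "(r Q, Q) \<in> (edgesL S T L)\<^sup>*"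
      using r that edgesL_sym by metis+
    then have "(P, Q) \<in> (edgesL S T L)\<^sup>*" using that(3) by auto
    then have "P - Q \<union> (Q - P) \<subseteq> L" using edgesL_symdiff[OF LX] by blast
    then show ?thesis unfolding L_def by blast
  qed
  have Ta: "a \<in> T a" "b \<in> T a" using H a b eq by auto
  have Sa: "S a \<inter> {a, b} = {b}" using H a Ta ab by auto
  have Sb: "S b \<inter> {a, b} = {a}" using H b Ta eq ab by auto
  have Tab: "T a \<inter> {a, b} = {a, b}" using Ta by auto
  have mem: "{} \<in> F0" "T a \<in> F0" "S a \<in> F0" "S b \<in> F0" using H0 a b by (auto simp: F0_def)
  have d: "r {} \<noteq> r (T a)" "r {} \<noteq> r (S a)" "r {} \<noteq> r (S b)"
     "r (T a) \<noteq> r (S a)" "r (T a) \<noteq> r (S b)" "r (S a) \<noteq> r (S b)"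
    using pat[OF mem(1) mem(2)] pat[OF mem(1) mem(3)] pat[OF mem(1) mem(4)]
      pat[OF mem(2) mem(3)] pat[OF mem(2) mem(4)] pat[OF mem(3) mem(4)] Sa Sb Tab ab
    by auto
  have "{r {}, r (T a), r (S a), r (S b)} \<subseteq> r ` F0" using mem by auto
  then have "card {r {}, r (T a), r (S a), r (S b)} \<le> card (r ` F0)"
    using finF by (intro card_mono) (auto simp: F0_def)
  moreover have "card {r {}, r (T a), r (S a), r (S b)} = 4" using d by simp
  ultimately show False using c3 by simp
qed



lemma OLD_mono: "OLD_set V A S \<Longrightarrow> S \<subseteq> S' \<Longrightarrow> S' \<subseteq> V \<Longrightarrow> OLD_set V A S'"
  unfolding OLD_set_def
proof (elim conjE, intro conjI ballI impI)
  fix v assume "\<forall>v\<in>V. in_nbrs A v \<inter> S \<noteq> {}" "S \<subseteq> S'" "v \<in> V"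
  then show "in_nbrs A v \<inter> S' \<noteq> {}" by blast
next
  fix u w assume "\<forall>u\<in>V. \<forall>w\<in>V. u \<noteq> w \<longrightarrow> (in_nbrs A u - in_nbrs A w \<union> (in_nbrs A w - in_nbrs A u)) \<inter> S \<noteq> {}"
    "S \<subseteq> S'" "u \<in> V" "w \<in> V" "u \<noteq> w"
  then show "(in_nbrs A u - in_nbrs A w \<union> (in_nbrs A w - in_nbrs A u)) \<inter> S' \<noteq> {}" by blast
qed

lemma OLD_sub: "OLD_set V A S \<Longrightarrow> S \<subseteq> V"
  by (simp add: OLD_set_def)

lemma OLD_V: "locatable V A \<Longrightarrow> OLD_set V A V"
proof -
  assume "locatable V A"
  then obtain S where S: "OLD_set V A S" unfolding locatable_def by blast
  then have "S \<subseteq> V" by (rule OLD_sub)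
  then show ?thesis using OLD_mono[OF S] by blast
qed

lemma gamma_eq_iff:
  assumes "finite V" "locatable V A"
  shows "gamma_OL V A = card V \<longleftrightarrow> (\<forall>v\<in>V. \<not> OLD_set V A (V - {v}))"
proof
  assume g: "gamma_OL V A = card V"
  show "\<forall>v\<in>V. \<not> OLD_set V A (V - {v})"
  proof (intro ballI notI)
    fix v assume v: "v \<in> V" and o: "OLD_set V A (V - {v})"
    have "gamma_OL V A \<le> card (V - {v})" unfolding gamma_OL_def
      by (rule Least_le) (use o in blast)
    moreover have "card (V - {v}) < card V" by (rule card_Diff1_less[OF assms(1) v])
    ultimately show False using g by simp
  qed
next
  assume H: "\<forall>v\<in>V. \<not> OLD_set V A (V - {v})"
  have ex: "\<exists>k S. OLD_set V A S \<and> card S = k" using OLD_V[OF assms(2)] by blast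
  have "\<exists>S. OLD_set V A S \<and> card S = gamma_OL V A"
    unfolding gamma_OL_def by (rule LeastI_ex[OF ex])
  then obtain S where S: "OLD_set V A S" "card S = gamma_OL V A" by blast
  have SV: "S \<subseteq> V" using S(1) by (rule OLD_sub)
  have "S = V"
  proof (rule ccontr)
    assume "S \<noteq> V"
    then obtain v where v: "v \<in> V" "v \<notin> S" using SV by auto
    have "S \<subseteq> V - {v}" using SV v by auto
    then have "OLD_set V A (V - {v})" using OLD_mono[OF S(1)] by auto
    then show False using H v by blast
  qed
  then show "gamma_OL V A = card V" using S by simp
qed

definition forced :: "'a set \<Rightarrow> ('a \<times> 'a) set \<Rightarrow> 'a \<Rightarrow> bool" where
  "forced V A v \<longleftrightarrow> (\<exists>w\<in>V. in_nbrs A w = {v})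
     \<or> (\<exists>u\<in>V. \<exists>w\<in>V. u \<noteq> w \<and> in_nbrs A u - in_nbrs A w \<union> (in_nbrs A w - in_nbrs A u) = {v})"

lemma in_nbrs_sub: "digraph V A \<Longrightarrow> w \<in> V \<Longrightarrow> in_nbrs A w \<subseteq> V"
  unfolding digraph_def in_nbrs_def by auto


lemma notOLD_iff:
  assumes "digraph V A" "locatable V A" "v \<in> V"
  shows "\<not> OLD_set V A (V - {v}) \<longleftrightarrow> forced V A v"
proof -
  have O: "OLD_set V A V" using OLD_V[OF assms(2)] .
  have sub: "\<And>w. w \<in> V \<Longrightarrow> in_nbrs A w \<subseteq> V" using in_nbrs_sub[OF assms(1)] .
  show ?thesis
  proof
    assume n: "\<not> OLD_set V A (V - {v})"
    then have "(\<exists>w\<in>V. in_nbrs A w \<inter> (V - {v}) = {}) \<or>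
      (\<exists>u\<in>V. \<exists>w\<in>V. u \<noteq> w \<and> (in_nbrs A u - in_nbrs A w \<union> (in_nbrs A w - in_nbrs A u)) \<inter> (V - {v}) = {})"
      unfolding OLD_set_def by blast
    then show "forced V A v"
    proof
      assume "\<exists>w\<in>V. in_nbrs A w \<inter> (V - {v}) = {}"
      then obtain w where w: "w \<in> V" "in_nbrs A w \<inter> (V - {v}) = {}" by blast
      have "in_nbrs A w \<inter> V \<noteq> {}" using O w(1) unfolding OLD_set_def by blast
      then have "in_nbrs A w = {v}" using w sub[OF w(1)] by blast
      then show ?thesis unfolding forced_def using w(1) by blast
    next
      assume "\<exists>u\<in>V. \<exists>w\<in>V. u \<noteq> w \<and> (in_nbrs A u - in_nbrs A w \<union> (in_nbrs A w - in_nbrs A u)) \<inter> (V - {v}) = {}"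
      then obtain u w where uw: "u \<in> V" "w \<in> V" "u \<noteq> w"
        "(in_nbrs A u - in_nbrs A w \<union> (in_nbrs A w - in_nbrs A u)) \<inter> (V - {v}) = {}" by blast
      have "(in_nbrs A u - in_nbrs A w \<union> (in_nbrs A w - in_nbrs A u)) \<inter> V \<noteq> {}"
        using O uw unfolding OLD_set_def by blast
      then have "in_nbrs A u - in_nbrs A w \<union> (in_nbrs A w - in_nbrs A u) = {v}"
        using uw sub[OF uw(1)] sub[OF uw(2)] by blast
      then show ?thesis unfolding forced_def using uw by blast
    qed
  next
    assume f: "forced V A v"
    show "\<not> OLD_set V A (V - {v})"
    proof
      assume o: "OLD_set V A (V - {v})"
      have o1: "\<forall>w\<in>V. in_nbrs A w \<inter> (V - {v}) \<noteq> {}" using o unfolding OLD_set_def by blast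
      have o2: "\<forall>u\<in>V. \<forall>w\<in>V. u \<noteq> w \<longrightarrow> (in_nbrs A u - in_nbrs A w \<union> (in_nbrs A w - in_nbrs A u)) \<inter> (V - {v}) \<noteq> {}"
        using o unfolding OLD_set_def by blast
      from f show False unfolding forced_def
      proof
        assume "\<exists>w\<in>V. in_nbrs A w = {v}"
        then obtain w where "w \<in> V" "in_nbrs A w = {v}" by blast
        with o1 show False by auto
      next
        assume "\<exists>u\<in>V. \<exists>w\<in>V. u \<noteq> w \<and> in_nbrs A u - in_nbrs A w \<union> (in_nbrs A w - in_nbrs A u) = {v}"
        then obtain u w where "u \<in> V" "w \<in> V" "u \<noteq> w" "in_nbrs A u - in_nbrs A w \<union> (in_nbrs A w - in_nbrs A u) = {v}" by blast
        with o2 show False by (metis Diff_disjoint Int_commute)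
      qed
    qed
  qed
qed



lemma dtree_inj:
  assumes "rooted_dtree W T r" "(p, w) \<in> T" "(q, w) \<in> T"
  shows "p = q"
proof -
  have fW: "finite W" and TW: "T \<subseteq> W \<times> W" and cT: "card T = card W - 1"
    and rt: "\<forall>x\<in>W. in_nbrs T x = {} \<longleftrightarrow> x = r" and rW: "r \<in> W"
    using assms(1) unfolding rooted_dtree_def by auto
  have fT: "finite T" using fW TW by (meson finite_SigmaI finite_subset)
  have img: "snd ` T = W - {r}"
  proof
    show "snd ` T \<subseteq> W - {r}"
    proof
      fix y assume "y \<in> snd ` T"
      then obtain x where xy: "(x, y) \<in> T" by force
      then have "y \<in> W" using TW by auto
      moreover have "in_nbrs T y \<noteq> {}" using xy unfolding in_nbrs_def by auto
      ultimately show "y \<in> W - {r}" using rt by auto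
    qed
    show "W - {r} \<subseteq> snd ` T"
    proof
      fix y assume y: "y \<in> W - {r}"
      then have "in_nbrs T y \<noteq> {}" using rt by auto
      then obtain x where "(x, y) \<in> T" unfolding in_nbrs_def by auto
      then show "y \<in> snd ` T" by force
    qed
  qed
  have "card (snd ` T) = card T" unfolding img cT using fW rW by simp
  then have "inj_on snd T" using fT eq_card_imp_inj_on by blast
  then have "(p, w) = (q, w)" using assms(2,3) by (metis inj_onD snd_conv)
  then show ?thesis by simp
qed

lemma dtree_acyc:
  assumes "rooted_dtree W T r"
  shows "(x, x) \<notin> T\<^sup>+"
proof
  assume xx: "(x, x) \<in> T\<^sup>+"
  have TW: "T \<subseteq> W \<times> W" and rt: "\<forall>x\<in>W. in_nbrs T x = {} \<longleftrightarrow> x = r" and rW: "r \<in> W"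
    and reach: "\<forall>x\<in>W. (r, x) \<in> T\<^sup>*"
    using assms(1) unfolding rooted_dtree_def by auto
  have "x \<in> W" using xx TW by (metis SigmaD1 subsetD tranclD)
  then have "(r, x) \<in> T\<^sup>*" using reach by auto
  then have "(x, x) \<notin> T\<^sup>+"
  proof (induction rule: rtrancl_induct)
    case base
    show ?case
    proof
      assume "(r, r) \<in> T\<^sup>+"
      then obtain z where "(z, r) \<in> T" using tranclD2 by metis
      then have "in_nbrs T r \<noteq> {}" unfolding in_nbrs_def by auto
      then show False using rt rW by auto
    qed
  next
    case (step y z)
    show ?case
    proof
      assume "(z, z) \<in> T\<^sup>+"
      then obtain c where c: "(z, c) \<in> T\<^sup>*" "(c, z) \<in> T" using tranclD2 by metis
      have "c = y" using dtree_inj[OF assms c(2) step.hyps(2)] .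
      then have "(y, y) \<in> T\<^sup>+" using step.hyps(2) c(1) by (metis rtrancl_into_trancl2)
      then show False using step.IH by simp
    qed
  qed
  then show False using xx by simp
qed

lemma partition_same_block:
  "partition_on V P \<Longrightarrow> B1 \<in> P \<Longrightarrow> B2 \<in> P \<Longrightarrow> x \<in> B1 \<Longrightarrow> x \<in> B2 \<Longrightarrow> B1 = B2"
  unfolding partition_on_def disjoint_def pairwise_def disjnt_def by blast

lemma forest_inj:
  assumes "rooted_forest V H" "(p, w) \<in> H" "(q, w) \<in> H"
  shows "p = q"
proof -
  obtain P where P: "partition_on V P" "H \<subseteq> (\<Union>B\<in>P. B \<times> B)"
    "\<forall>B\<in>P. \<exists>r. rooted_dtree B (H \<inter> (B \<times> B)) r"
    using assms(1) unfolding rooted_forest_def by blast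
  obtain B1 where B1: "B1 \<in> P" "p \<in> B1" "w \<in> B1" using P(2) assms(2) by blast
  obtain B2 where B2: "B2 \<in> P" "q \<in> B2" "w \<in> B2" using P(2) assms(3) by blast
  have "B1 = B2" using partition_same_block[OF P(1) B1(1) B2(1) B1(3) B2(3)] .
  obtain r where r: "rooted_dtree B1 (H \<inter> (B1 \<times> B1)) r" using P(3) B1(1) by blast
  show ?thesis using dtree_inj[OF r] assms(2,3) B1 B2 \<open>B1 = B2\<close> by blast
qed

lemma forest_acyc:
  assumes "rooted_forest V H"
  shows "(x, x) \<notin> H\<^sup>+"
proof
  assume xx: "(x, x) \<in> H\<^sup>+"
  obtain P where P: "partition_on V P" "H \<subseteq> (\<Union>B\<in>P. B \<times> B)"
    "\<forall>B\<in>P. \<exists>r. rooted_dtree B (H \<inter> (B \<times> B)) r"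
    using assms(1) unfolding rooted_forest_def by blast
  obtain y where "(x, y) \<in> H" using xx by (metis tranclD)
  then obtain B where B: "B \<in> P" "x \<in> B" using P(2) by blast
  have closed: "b \<in> B" if ab: "(a, b) \<in> H" "a \<in> B" for a b
  proof -
    obtain B' where "B' \<in> P" "a \<in> B'" "b \<in> B'" using P(2) ab(1) by blast
    then show ?thesis using partition_same_block[OF P(1) B(1)] ab(2) by metis
  qed
  have gen: "(x, z) \<in> (H \<inter> (B \<times> B))\<^sup>+ \<and> z \<in> B" if "(x, z) \<in> H\<^sup>+" for z
    using that
  proof (induction rule: trancl_induct)
    case (base y)
    then show ?case using closed B(2) by auto
  next
    case (step y z)
    then have "z \<in> B" using closed by auto
    then show ?case using step by (meson IntI SigmaI trancl.trancl_into_trancl)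
  qed
  obtain r where r: "rooted_dtree B (H \<inter> (B \<times> B)) r" using P(3) B(1) by blast
  show False using gen[OF xx] dtree_acyc[OF r] by blast
qed


lemma constructible_forced:
  assumes dg: "digraph V A" and c: "constructible V A" and v: "v \<in> V"
  shows "forced V A v"
proof -
  obtain f Vd Vl H where f: "bij_betw f V V" and part: "Vd \<union> Vl = V" "Vd \<inter> Vl = {}"
    and HV: "H \<subseteq> V \<times> V" and forest: "rooted_forest V H"
    and roots: "forest_roots V H = f ` Vd"
    and Vl: "\<forall>x\<in>Vl. in_nbrs H (f x) \<noteq> {}"
    and A: "A = {(v, f v) | v. v \<in> V} \<union> {(inv_into V f v, w) | v w. v \<in> V \<and> (v, w) \<in> H\<^sup>*}"
    using c unfolding constructible_def by blast
  define g where "g = inv_into V f"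
  have injf: "inj_on f V" and fV: "f ` V = V" using f unfolding bij_betw_def by auto
  have gV: "g x \<in> V" if "x \<in> V" for x unfolding g_def using that fV by (metis inv_into_into)
  have fg: "f (g x) = x" if "x \<in> V" for x unfolding g_def using that fV by (metis f_inv_into_f)
  have gf: "g (f x) = x" if "x \<in> V" for x unfolding g_def using that injf by simp
  have injg: "inj_on g V" unfolding g_def using f bij_betw_inv_into bij_betw_def by blast
  define Anc where "Anc w = {u \<in> V. (u, w) \<in> H\<^sup>*}" for w
  have N: "in_nbrs A w = g ` Anc w" if w: "w \<in> V" for w
  proof
    show "in_nbrs A w \<subseteq> g ` Anc w"
    proof
      fix a assume "a \<in> in_nbrs A w"
      then have "(a, w) \<in> A" unfolding in_nbrs_def by simp
      then consider (1) "a \<in> V" "f a = w" | (2) u where "u \<in> V" "(u, w) \<in> H\<^sup>*" "a = g u"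
        unfolding A g_def by blast
      then show "a \<in> g ` Anc w"
      proof cases
        case 1
        then have "a = g w" using gf by auto
        then show ?thesis using w unfolding Anc_def by auto
      next
        case 2
        then show ?thesis unfolding Anc_def by auto
      qed
    qed
    show "g ` Anc w \<subseteq> in_nbrs A w"
    proof
      fix a assume "a \<in> g ` Anc w"
      then obtain u where "u \<in> V" "(u, w) \<in> H\<^sup>*" "a = g u" unfolding Anc_def by auto
      then have "(a, w) \<in> A" unfolding A g_def by blast
      then show "a \<in> in_nbrs A w" unfolding in_nbrs_def by simp
    qed
  qed
  define w where "w = f v"
  have wV: "w \<in> V" using v fV w_def by auto
  have gw: "g w = v" using gf v w_def by simp
  show ?thesis
  proof (cases "v \<in> Vd")
    case True
    then have "w \<in> forest_roots V H" using roots w_def by auto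
    then have nH: "in_nbrs H w = {}" unfolding forest_roots_def by auto
    have "Anc w = {w}"
    proof
      show "Anc w \<subseteq> {w}"
      proof
        fix u assume "u \<in> Anc w"
        then have "(u, w) \<in> H\<^sup>*" unfolding Anc_def by auto
        then show "u \<in> {w}"
        proof (cases rule: rtranclE)
          case (step z)
          then show ?thesis using nH unfolding in_nbrs_def by auto
        qed simp
      qed
      show "{w} \<subseteq> Anc w" using wV unfolding Anc_def by auto
    qed
    then have "in_nbrs A w = {v}" using N[OF wV] gw by simp
    then show ?thesis unfolding forced_def using wV by blast
  next
    case False
    then have "v \<in> Vl" using part v by auto
    then have "in_nbrs H w \<noteq> {}" using Vl w_def by auto
    then obtain p where pw: "(p, w) \<in> H" unfolding in_nbrs_def by auto
    have pV: "p \<in> V" using pw HV by auto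
    have AncW: "Anc w = insert w (Anc p)"
    proof
      show "Anc w \<subseteq> insert w (Anc p)"
      proof
        fix u assume "u \<in> Anc w"
        then have uV: "u \<in> V" and uw: "(u, w) \<in> H\<^sup>*" unfolding Anc_def by auto
        from uw show "u \<in> insert w (Anc p)"
        proof (cases rule: rtranclE)
          case (step z)
          then have "z = p" using forest_inj[OF forest _ pw] by blast
          then show ?thesis using step uV unfolding Anc_def by auto
        qed simp
      qed
      show "insert w (Anc p) \<subseteq> Anc w"
        using wV pw unfolding Anc_def by (auto intro: rtrancl_into_rtrancl)
    qed
    have wnp: "w \<notin> Anc p"
    proof
      assume "w \<in> Anc p"
      then have "(w, p) \<in> H\<^sup>*" unfolding Anc_def by auto
      then have "(w, w) \<in> H\<^sup>+" using pw by (rule rtrancl_into_trancl1)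
      then show False using forest_acyc[OF forest] by blast
    qed
    have pw_ne: "w \<noteq> p" using pw forest_acyc[OF forest] by blast
    have AncV: "Anc p \<subseteq> V" unfolding Anc_def by auto
    have vn: "v \<notin> g ` Anc p"
    proof
      assume "v \<in> g ` Anc p"
      then obtain u where "u \<in> Anc p" "g u = g w" using gw by auto
      then have "u = w" using injg AncV wV by (meson inj_onD subsetD)
      then show False using wnp \<open>u \<in> Anc p\<close> by simp
    qed
    have "in_nbrs A w = insert v (in_nbrs A p)" using N[OF wV] N[OF pV] AncW gw by simp
    then have "in_nbrs A w - in_nbrs A p \<union> (in_nbrs A p - in_nbrs A w) = {v}"
      using vn N[OF pV] by auto
    then show ?thesis unfolding forced_def using wV pV pw_ne by blast
  qed
qed



lemma forced_constructible:
  assumes dg: "digraph V A" and loc: "locatable V A" and allf: "\<forall>v\<in>V. forced V A v"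
  shows "constructible V A"
proof -
  define N where "N = in_nbrs A"
  have finV: "finite V" using dg unfolding digraph_def by auto
  have NV: "N w \<subseteq> V" if "w \<in> V" for w using in_nbrs_sub[OF dg that] unfolding N_def .
  have O: "OLD_set V A V" using OLD_V[OF loc] .
  have Nne: "N w \<noteq> {}" if "w \<in> V" for w
  proof -
    have "\<forall>w\<in>V. in_nbrs A w \<inter> V \<noteq> {}" using O unfolding OLD_set_def by blast
    then show ?thesis using that unfolding N_def by auto
  qed
  have injN: "inj_on N V"
  proof (rule inj_onI, rule ccontr)
    fix u w assume "u \<in> V" "w \<in> V" "N u = N w" "u \<noteq> w"
    moreover have "\<forall>u\<in>V. \<forall>w\<in>V. u \<noteq> w \<longrightarrow> (in_nbrs A u - in_nbrs A w \<union> (in_nbrs A w - in_nbrs A u)) \<inter> V \<noteq> {}"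
      using O unfolding OLD_set_def by blast
    ultimately show False unfolding N_def by auto
  qed
  have ex: "\<forall>x\<in>V. \<exists>PQ. fst PQ \<in> insert {} (N ` V) \<and> snd PQ \<in> N ` V \<and> x \<notin> fst PQ \<and> snd PQ = insert x (fst PQ)"
  proof
    fix x assume x: "x \<in> V"
    have "forced V A x" using allf x by blast
    then have fx: "(\<exists>w\<in>V. N w = {x}) \<or> (\<exists>u\<in>V. \<exists>w\<in>V. N u - N w \<union> (N w - N u) = {x})"
      unfolding forced_def N_def by auto
    then consider (d) w where "w \<in> V" "N w = {x}"
      | (l) u w where "u \<in> V" "w \<in> V" "N u - N w \<union> (N w - N u) = {x}"
      by auto
    then show "\<exists>PQ. fst PQ \<in> insert {} (N ` V) \<and> snd PQ \<in> N ` V \<and> x \<notin> fst PQ \<and> snd PQ = insert x (fst PQ)"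
    proof cases
      case (d w)
      then show ?thesis by (intro exI[of _ "({}, N w)"]) auto
    next
      case (l u w)
      show ?thesis
      proof (cases "x \<in> N u")
        case True
        have e: "y \<in> N u - N w \<union> (N w - N u) \<longleftrightarrow> y = x" for y using l(3) by simp
        have n: "x \<notin> N w" using e[of x] True by simp
        have "N u = insert x (N w)"
        proof (rule set_eqI)
          fix y show "y \<in> N u \<longleftrightarrow> y \<in> insert x (N w)" using e[of y] True n by auto
        qed
        note n this
        then show ?thesis using l by (intro exI[of _ "(N w, N u)"]) auto
      next
        case False
        have e: "y \<in> N u - N w \<union> (N w - N u) \<longleftrightarrow> y = x" for y using l(3) by simp
        have n: "x \<in> N w" using e[of x] False by simp
        have "N w = insert x (N u)"
        proof (rule set_eqI)
          fix y show "y \<in> N w \<longleftrightarrow> y \<in> insert x (N u)" using e[of y] False n by auto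
        qed
        note n this
        then show ?thesis using l False by (intro exI[of _ "(N u, N w)"]) auto
      qed
    qed
  qed
  then obtain h where h: "\<forall>x\<in>V. fst (h x) \<in> insert {} (N ` V) \<and> snd (h x) \<in> N ` V \<and> x \<notin> fst (h x) \<and> snd (h x) = insert x (fst (h x))"
    by (rule bchoice[elim_format]) blast
  define S where "S x = fst (h x)" for x
  define T where "T x = snd (h x)" for x
  have ST: "\<forall>x\<in>V. S x \<in> insert {} (N ` V) \<and> T x \<in> N ` V \<and> x \<notin> S x \<and> T x = insert x (S x)"
    using h unfolding S_def T_def by blast
  have cNV: "card (N ` V) = card V" using injN by (rule card_image)
  have injT: "inj_on T V"
  proof (rule key[of V "N ` V" S T])
    show "finite V" by (rule finV)
    show "N ` V \<subseteq> Pow V" using NV by auto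
    show "{} \<notin> N ` V" using Nne by auto
    show "card (N ` V) = card V" by (rule cNV)
    show "\<forall>x\<in>V. S x \<in> insert {} (N ` V) \<and> T x \<in> N ` V \<and> x \<notin> S x \<and> T x = insert x (S x)" by (rule ST)
  qed
  have TV: "T ` V = N ` V"
  proof (rule card_subset_eq)
    show "finite (N ` V)" using finV by simp
    show "T ` V \<subseteq> N ` V" using ST by auto
    show "card (T ` V) = card (N ` V)" using card_image[OF injT] cNV by simp
  qed
  define g where "g w = inv_into V T (N w)" for w
  have gV: "g w \<in> V" if "w \<in> V" for w unfolding g_def using that TV by (metis image_eqI inv_into_into)
  have Tg: "T (g w) = N w" if "w \<in> V" for w unfolding g_def using that TV by (metis image_eqI f_inv_into_f)
  have injg: "inj_on g V"
  proof (rule inj_onI)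
    fix a b assume "a \<in> V" "b \<in> V" "g a = g b"
    then have "N a = N b" using Tg by metis
    then show "a = b" using injN \<open>a \<in> V\<close> \<open>b \<in> V\<close> by (meson inj_onD)
  qed
  have gVV: "g ` V = V" using endo_inj_surj[OF finV _ injg] gV by auto
  have bg: "bij_betw g V V" using injg gVV unfolding bij_betw_def by auto
  define f where "f = inv_into V g"
  have bf: "bij_betw f V V" unfolding f_def using bg by (rule bij_betw_inv_into)
  have invf: "inv_into V f w = g w" if "w \<in> V" for w unfolding f_def using inv_into_inv_into_eq[OF bg that] .
  have fV: "f x \<in> V" if "x \<in> V" for x using bf that unfolding bij_betw_def by auto
  have gf: "g (f x) = x" if "x \<in> V" for x unfolding f_def using that gVV by (metis f_inv_into_f)
  have fg: "f (g w) = w" if "w \<in> V" for w unfolding f_def using that injg by simp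
  have Ng: "N w = insert (g w) (S (g w))" "g w \<notin> S (g w)" "S (g w) \<in> insert {} (N ` V)"
    if "w \<in> V" for w using ST gV[OF that] Tg[OF that] by auto
  define H where "H = {(p, w). p \<in> V \<and> w \<in> V \<and> N p = S (g w)}"
  have HV: "H \<subseteq> V \<times> V" unfolding H_def by auto
  have Hcard: "card (N p) < card (N w)" if "(p, w) \<in> H" for p w
  proof -
    have w: "w \<in> V" and p: "N p = S (g w)" using that unfolding H_def by auto
    have "finite (N w)" using NV[OF w] finV finite_subset by blast
    then show ?thesis using Ng[OF w] p by simp
  qed
  have Huniq: "p = q" if "(p, w) \<in> H" "(q, w) \<in> H" for p q w
    using that injN unfolding H_def by (auto dest: inj_onD)
  have Hroot: "in_nbrs H w = {} \<longleftrightarrow> S (g w) = {}" if w: "w \<in> V" for w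
  proof
    assume "in_nbrs H w = {}"
    then show "S (g w) = {}" using Ng(3)[OF w] w unfolding in_nbrs_def H_def by auto
  next
    assume "S (g w) = {}"
    then show "in_nbrs H w = {}" using Nne unfolding in_nbrs_def H_def by auto
  qed
  have reachV: "w \<in> V" if "(u, w) \<in> H\<^sup>*" "u \<in> V" for u w
    using that by (induction rule: rtrancl_induct) (use HV in auto)
  define Anc where "Anc w = {u \<in> V. (u, w) \<in> H\<^sup>*}" for w
  have anc_root: "Anc w = {w}" if "w \<in> V" "in_nbrs H w = {}" for w
  proof
    show "Anc w \<subseteq> {w}"
    proof
      fix u assume "u \<in> Anc w"
      then have "(u, w) \<in> H\<^sup>*" unfolding Anc_def by auto
      then show "u \<in> {w}"
      proof (cases rule: rtranclE)
        case (step z)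
        then show ?thesis using that unfolding in_nbrs_def by auto
      qed simp
    qed
    show "{w} \<subseteq> Anc w" using that unfolding Anc_def by auto
  qed
  have anc_step: "Anc w = insert w (Anc p)" if pw: "(p, w) \<in> H" for p w
  proof
    have wV: "w \<in> V" using pw HV by auto
    show "Anc w \<subseteq> insert w (Anc p)"
    proof
      fix u assume "u \<in> Anc w"
      then have uV: "u \<in> V" and uw: "(u, w) \<in> H\<^sup>*" unfolding Anc_def by auto
      from uw show "u \<in> insert w (Anc p)"
      proof (cases rule: rtranclE)
        case (step z)
        then have "z = p" using Huniq pw by blast
        then show ?thesis using step uV unfolding Anc_def by auto
      qed simp
    qed
    show "insert w (Anc p) \<subseteq> Anc w"
      using wV pw unfolding Anc_def by (auto intro: rtrancl_into_rtrancl)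
  qed
  have parent: "\<exists>p. (p, w) \<in> H" if "w \<in> V" "S (g w) \<noteq> {}" for w
    using Hroot[OF that(1)] that(2) unfolding in_nbrs_def by auto
  have claimC: "N w = g ` Anc w" if "w \<in> V" for w
    using that
  proof (induction "card (N w)" arbitrary: w rule: less_induct)
    case less
    show ?case
    proof (cases "S (g w) = {}")
      case True
      then have "in_nbrs H w = {}" using Hroot less.prems by auto
      then show ?thesis using anc_root less.prems Ng(1)[OF less.prems] True by simp
    next
      case False
      then obtain p where pw: "(p, w) \<in> H" using parent less.prems by blast
      have pV: "p \<in> V" using pw HV by auto
      have IH: "N p = g ` Anc p" using less.hyps[OF Hcard[OF pw] pV] .
      have "N p = S (g w)" using pw unfolding H_def by auto
      then show ?thesis using Ng(1)[OF less.prems] IH anc_step[OF pw] by simp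
    qed
  qed
  define Vd where "Vd = {x \<in> V. S x = {}}"
  define Vl where "Vl = V - Vd"
  have roots: "forest_roots V H = f ` Vd"
  proof
    show "forest_roots V H \<subseteq> f ` Vd"
    proof
      fix w assume "w \<in> forest_roots V H"
      then have w: "w \<in> V" "in_nbrs H w = {}" unfolding forest_roots_def by auto
      then have "g w \<in> Vd" using Hroot gV unfolding Vd_def by auto
      then show "w \<in> f ` Vd" using fg[OF w(1)] by (metis image_eqI)
    qed
    show "f ` Vd \<subseteq> forest_roots V H"
    proof
      fix w assume "w \<in> f ` Vd"
      then obtain x where x: "x \<in> V" "S x = {}" "w = f x" unfolding Vd_def by auto
      then have "w \<in> V" "g w = x" using fV gf by auto
      then show "w \<in> forest_roots V H" using Hroot x unfolding forest_roots_def by auto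
    qed
  qed
  have VlH: "\<forall>x\<in>Vl. in_nbrs H (f x) \<noteq> {}"
  proof
    fix x assume "x \<in> Vl"
    then have x: "x \<in> V" "S x \<noteq> {}" unfolding Vl_def Vd_def by auto
    then show "in_nbrs H (f x) \<noteq> {}" using Hroot[OF fV[OF x(1)]] gf[OF x(1)] by simp
  qed
  have Aeq: "A = {(v, f v) | v. v \<in> V} \<union> {(inv_into V f v, w) | v w. v \<in> V \<and> (v, w) \<in> H\<^sup>*}"
  proof (rule set_eqI)
    fix e :: "'a \<times> 'a"
    obtain a b where e: "e = (a, b)" by fastforce
    have AV: "A \<subseteq> V \<times> V" using dg unfolding digraph_def by auto
    have memA: "(a, b) \<in> A \<longleftrightarrow> b \<in> V \<and> a \<in> N b" using AV unfolding N_def in_nbrs_def by auto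
    have "(a, b) \<in> A \<longleftrightarrow> (a, b) \<in> {(v, f v) | v. v \<in> V} \<union> {(inv_into V f v, w) | v w. v \<in> V \<and> (v, w) \<in> H\<^sup>*}"
    proof
      assume "(a, b) \<in> A"
      then have b: "b \<in> V" "a \<in> N b" using memA by auto
      then obtain u where "u \<in> Anc b" "a = g u" using claimC by auto
      then have "u \<in> V" "(u, b) \<in> H\<^sup>*" "a = inv_into V f u" using invf unfolding Anc_def by auto
      then show "(a, b) \<in> {(v, f v) | v. v \<in> V} \<union> {(inv_into V f v, w) | v w. v \<in> V \<and> (v, w) \<in> H\<^sup>*}"
        by blast
    next
      assume "(a, b) \<in> {(v, f v) | v. v \<in> V} \<union> {(inv_into V f v, w) | v w. v \<in> V \<and> (v, w) \<in> H\<^sup>*}"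
      then consider (1) "a \<in> V" "b = f a" | (2) u where "u \<in> V" "(u, b) \<in> H\<^sup>*" "a = inv_into V f u"
        by blast
      then show "(a, b) \<in> A"
      proof cases
        case 1
        then have "b \<in> V" "g b = a" using fV gf by auto
        then show ?thesis using memA Ng(1) by auto
      next
        case 2
        then have bV: "b \<in> V" using reachV by blast
        have "a = g u" using 2 invf by auto
        then have "a \<in> g ` Anc b" using 2 unfolding Anc_def by auto
        then show ?thesis using memA claimC bV by auto
      qed
    qed
    then show "e \<in> A \<longleftrightarrow> e \<in> {(v, f v) | v. v \<in> V} \<union> {(inv_into V f v, w) | v w. v \<in> V \<and> (v, w) \<in> H\<^sup>*}"
      using e by simp
  qed
  define R where "R = {r \<in> V. in_nbrs H r = {}}"
  have rt_ex: "\<exists>r\<in>R. (r, w) \<in> H\<^sup>*" if "w \<in> V" for w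
    using that
  proof (induction "card (N w)" arbitrary: w rule: less_induct)
    case less
    show ?case
    proof (cases "in_nbrs H w = {}")
      case True
      then show ?thesis using less.prems unfolding R_def by auto
    next
      case False
      then obtain p where pw: "(p, w) \<in> H" unfolding in_nbrs_def by auto
      have pV: "p \<in> V" using pw HV by auto
      obtain r where "r \<in> R" "(r, p) \<in> H\<^sup>*" using less.hyps[OF Hcard[OF pw] pV] by blast
      then show ?thesis using pw by (meson rtrancl.rtrancl_into_rtrancl)
    qed
  qed
  have rt_uniq: "r1 = r2" if "w \<in> V" "r1 \<in> R" "r2 \<in> R" "(r1, w) \<in> H\<^sup>*" "(r2, w) \<in> H\<^sup>*" for w r1 r2
    using that
  proof (induction "card (N w)" arbitrary: w rule: less_induct)
    case less
    show ?case
    proof (cases "in_nbrs H w = {}")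
      case True
      have "r = w" if "(r, w) \<in> H\<^sup>*" for r
        using that
      proof (cases rule: rtranclE)
        case (step z)
        then show ?thesis using True unfolding in_nbrs_def by auto
      qed simp
      then show ?thesis using less.prems by metis
    next
      case False
      then obtain p where pw: "(p, w) \<in> H" unfolding in_nbrs_def by auto
      have pV: "p \<in> V" using pw HV by auto
      have "(r, p) \<in> H\<^sup>*" if "r \<in> R" "(r, w) \<in> H\<^sup>*" for r
        using that(2)
      proof (cases rule: rtranclE)
        case base
        then show ?thesis using that(1) False unfolding R_def by auto
      next
        case (step z)
        then show ?thesis using Huniq pw by blast
      qed
      then show ?thesis using less.hyps[OF Hcard[OF pw] pV] less.prems by blast
    qed
  qed
  define Blk where "Blk r = {w \<in> V. (r, w) \<in> H\<^sup>*}" for r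
  define P where "P = Blk ` R"
  have noloop: "(x, x) \<notin> H" for x using Hcard by blast
  have part: "partition_on V P"
    unfolding partition_on_def disjoint_def pairwise_def disjnt_def
  proof (intro conjI ballI impI)
    show "\<Union> P = V"
    proof
      show "\<Union> P \<subseteq> V" unfolding P_def Blk_def by auto
      show "V \<subseteq> \<Union> P"
      proof
        fix w assume "w \<in> V"
        then obtain r where "r \<in> R" "(r, w) \<in> H\<^sup>*" using rt_ex by blast
        then show "w \<in> \<Union> P" unfolding P_def Blk_def using \<open>w \<in> V\<close> by auto
      qed
    qed
    fix B1 B2 assume B: "B1 \<in> P" "B2 \<in> P" "B1 \<noteq> B2"
    then obtain r1 r2 where r: "r1 \<in> R" "r2 \<in> R" "B1 = Blk r1" "B2 = Blk r2" unfolding P_def by auto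
    show "B1 \<inter> B2 = {}"
    proof (rule ccontr)
      assume "B1 \<inter> B2 \<noteq> {}"
      then obtain w where "w \<in> V" "(r1, w) \<in> H\<^sup>*" "(r2, w) \<in> H\<^sup>*" using r unfolding Blk_def by auto
      then have "r1 = r2" using rt_uniq r by blast
      then show False using r B(3) by simp
    qed
  next
    show "{} \<notin> P" unfolding P_def Blk_def R_def by auto
  qed
  have rootblk: "w \<in> Blk r" if "r \<in> R" "(r, w) \<in> H\<^sup>*" for r w
    using that reachV unfolding Blk_def R_def by auto
  have Hblk: "H \<subseteq> (\<Union>B\<in>P. B \<times> B)"
  proof
    fix e assume e: "e \<in> H"
    obtain p w where pw: "e = (p, w)" by fastforce
    have pV: "p \<in> V" using e pw HV by auto
    obtain r where r: "r \<in> R" "(r, p) \<in> H\<^sup>*" using rt_ex[OF pV] by blast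
    have "(r, w) \<in> H\<^sup>*" using r e pw by (meson rtrancl.rtrancl_into_rtrancl)
    then have "p \<in> Blk r" "w \<in> Blk r" using rootblk r by auto
    then show "e \<in> (\<Union>B\<in>P. B \<times> B)" using pw r unfolding P_def by auto
  qed
  have dtree: "rooted_dtree (Blk r) (H \<inter> (Blk r \<times> Blk r)) r" if r: "r \<in> R" for r
  proof -
    define B where "B = Blk r"
    define Tr where "Tr = H \<inter> (B \<times> B)"
    have rV: "r \<in> V" and rin: "in_nbrs H r = {}" using r unfolding R_def by auto
    have rB: "r \<in> B" unfolding B_def Blk_def using rV by auto
    have BV: "B \<subseteq> V" unfolding B_def Blk_def by auto
    have finB: "finite B" using BV finV finite_subset by blast
    have reachT: "(r, x) \<in> Tr\<^sup>*" if "(r, x) \<in> H\<^sup>*" for x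
      using that
    proof (induction rule: rtrancl_induct)
      case base then show ?case by simp
    next
      case (step y z)
      have "y \<in> B" "z \<in> B" using step.hyps rootblk[OF r] unfolding B_def
        by (auto intro: rtrancl_into_rtrancl)
      then have "(y, z) \<in> Tr" using step.hyps(2) unfolding Tr_def by auto
      then show ?case using step.IH by (meson rtrancl.rtrancl_into_rtrancl)
    qed
    have reach: "\<forall>x\<in>B. (r, x) \<in> Tr\<^sup>*" using reachT unfolding B_def Blk_def by auto
    have parB: "\<exists>p. (p, x) \<in> Tr" if xx: "x \<in> B" "x \<noteq> r" for x
    proof -
      have xr: "(r, x) \<in> H\<^sup>*" using xx unfolding B_def Blk_def by auto
      then obtain z where z: "(r, z) \<in> H\<^sup>*" "(z, x) \<in> H" using xx(2) by (metis rtranclE)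
      have "z \<in> B" using z(1) rootblk[OF r] unfolding B_def by auto
      then show ?thesis using z(2) xx(1) unfolding Tr_def by auto
    qed
    have inb: "\<forall>x\<in>B. in_nbrs Tr x = {} \<longleftrightarrow> x = r"
    proof
      fix x assume x: "x \<in> B"
      show "in_nbrs Tr x = {} \<longleftrightarrow> x = r"
      proof
        assume "in_nbrs Tr x = {}"
        then show "x = r" using parB[OF x] unfolding in_nbrs_def by auto
      next
        assume "x = r"
        then show "in_nbrs Tr x = {}" using rin unfolding in_nbrs_def Tr_def by auto
      qed
    qed
    have img: "snd ` Tr = B - {r}"
    proof
      show "snd ` Tr \<subseteq> B - {r}"
      proof
        fix y assume "y \<in> snd ` Tr"
        then obtain x where xy: "(x, y) \<in> Tr" by force
        then have "y \<in> B" unfolding Tr_def by auto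
        moreover have "y \<noteq> r" using xy rin unfolding Tr_def in_nbrs_def by auto
        ultimately show "y \<in> B - {r}" by auto
      qed
      show "B - {r} \<subseteq> snd ` Tr"
      proof
        fix y assume "y \<in> B - {r}"
        then obtain x where "(x, y) \<in> Tr" using parB by blast
        then show "y \<in> snd ` Tr" by force
      qed
    qed
    have injsnd: "inj_on snd Tr"
    proof (rule inj_onI)
      fix a b assume "a \<in> Tr" "b \<in> Tr" "snd a = snd b"
      then show "a = b" using Huniq unfolding Tr_def by (metis IntD1 prod.collapse)
    qed
    have cT: "card Tr = card B - 1"
      using card_image[OF injsnd] img finB rB by (simp add: card_Diff_singleton)
    have conn: "\<forall>x\<in>B. \<forall>y\<in>B. (x, y) \<in> (Tr \<union> Tr\<inverse>)\<^sup>*"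
    proof (intro ballI)
      fix x y assume "x \<in> B" "y \<in> B"
      then have "(r, x) \<in> Tr\<^sup>*" "(r, y) \<in> Tr\<^sup>*" using reach by auto
      then have "(x, r) \<in> (Tr\<inverse>)\<^sup>*" "(r, y) \<in> Tr\<^sup>*" by (auto simp: rtrancl_converse)
      then have "(x, r) \<in> (Tr \<union> Tr\<inverse>)\<^sup>*" "(r, y) \<in> (Tr \<union> Tr\<inverse>)\<^sup>*"
        using rtrancl_mono[of "Tr\<inverse>" "Tr \<union> Tr\<inverse>"] rtrancl_mono[of "Tr" "Tr \<union> Tr\<inverse>"] by auto
      then show "(x, y) \<in> (Tr \<union> Tr\<inverse>)\<^sup>*" by (rule rtrancl_trans)
    qed
    have no2: "\<forall>x y. (x, y) \<in> Tr \<longrightarrow> (y, x) \<notin> Tr"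
      using Hcard unfolding Tr_def by (meson IntD1 order.asym)
    have "rooted_dtree B Tr r"
      unfolding rooted_dtree_def
      using finB rB no2 conn cT inb reach noloop unfolding Tr_def by auto
    then show ?thesis unfolding B_def Tr_def .
  qed
  have forest: "rooted_forest V H"
    unfolding rooted_forest_def
    using part Hblk dtree unfolding P_def by blast
  have froots: "forest_roots V H = f ` Vd" by (rule roots)
  show ?thesis
    unfolding constructible_def
    apply (rule exI[of _ f], rule exI[of _ Vd], rule exI[of _ Vl], rule exI[of _ H])
    using bf HV forest roots VlH Aeq unfolding Vl_def Vd_def by auto
qed


theorem theorem18:
  fixes V :: "'a set" and A :: "('a \<times> 'a) set"
  assumes "digraph V A" and "locatable V A"
  shows "gamma_OL V A = card V \<longleftrightarrow> constructible V A"
proof -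
  have finV: "finite V" using assms(1) unfolding digraph_def by auto
  have "gamma_OL V A = card V \<longleftrightarrow> (\<forall>v\<in>V. forced V A v)"
    using gamma_eq_iff[OF finV assms(2)] notOLD_iff[OF assms(1) assms(2)] by auto
  also have "\<dots> \<longleftrightarrow> constructible V A"
    using forced_constructible[OF assms] constructible_forced[OF assms(1)] by blast
  finally show ?thesis .
qed

end
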